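(* Let $D$ be a finite digraph, let $k\ge 2$, and let $D_1,\dots,D_t$ be the strong components of $D$. Then $D$ is $k$-AW if and only if each $D_i$ is $k$-AW.
   Context: A digraph is strongly connected if for any two vertices $v,w$ there is a directed walk from $v$ to $w$ and one from $w$ to $v$. A strong component of $D$ is a maximal strongly connected subdigraph (an induced subdigraph); the vertex sets of the strong components partition $V(D)$. The $k$-lights out game on a digraph $D$ ($k\ge 2$): start with a labeling $\lambda:V(D)\to\mathbb{Z}_k$. Toggling a vertex $v$ increases by $1$ (mod $k$) the label of $v$ and of every vertex $w$ with $vw\in A(D)$. The game is won when every vertex has label $0$. A labeling is $k$-winnable if some finite sequence of toggles wins the game starting from it; $D$ is $k$-Always Winnable ($k$-AW) if every labeling $V(D)\to\mathbb{Z}_k$ is $k$-winnable. *)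

theory Defs
  imports Main
begin

text \<open>A finite digraph is given by a vertex set V and an arc relation A \<subseteq> V \<times> V
  (an arc vw is the pair (v,w)).\<close>

definition digraph :: "'a set \<Rightarrow> ('a \<times> 'a) set \<Rightarrow> bool" where
  "digraph V A \<longleftrightarrow> A \<subseteq> V \<times> V"

definition strongly_connected :: "'a set \<Rightarrow> ('a \<times> 'a) set \<Rightarrow> bool" where
  "strongly_connected V A \<longleftrightarrow>
     (\<forall>v\<in>V. \<forall>w\<in>V. (v, w) \<in> (A \<inter> (V \<times> V))\<^sup>* \<and> (w, v) \<in> (A \<inter> (V \<times> V))\<^sup>*)"

definition strong_component :: "'a set \<Rightarrow> ('a \<times> 'a) set \<Rightarrow> 'a set \<Rightarrow> bool" where
  "strong_component V A C \<longleftrightarrow>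
     C \<subseteq> V \<and> strongly_connected C (A \<inter> (C \<times> C)) \<and>
     (\<forall>C'. C \<subseteq> C' \<and> C' \<subseteq> V \<and> strongly_connected C' (A \<inter> (C' \<times> C')) \<longrightarrow> C' = C)"

text \<open>Toggling v adds 1 (mod k) to the label of v and of every w with vw an arc.
  Labels in Z_k are represented by naturals below k.\<close>
definition toggle :: "('a \<times> 'a) set \<Rightarrow> nat \<Rightarrow> 'a \<Rightarrow> ('a \<Rightarrow> nat) \<Rightarrow> ('a \<Rightarrow> nat)" where
  "toggle A k v lab = (\<lambda>w. if w = v \<or> (v, w) \<in> A then (lab w + 1) mod k else lab w)"

definition winnable :: "nat \<Rightarrow> 'a set \<Rightarrow> ('a \<times> 'a) set \<Rightarrow> ('a \<Rightarrow> nat) \<Rightarrow> bool" where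
  "winnable k V A lab \<longleftrightarrow>
     (\<exists>vs. set vs \<subseteq> V \<and> (\<forall>w\<in>V. fold (toggle A k) vs lab w = 0))"

definition always_winnable :: "nat \<Rightarrow> 'a set \<Rightarrow> ('a \<times> 'a) set \<Rightarrow> bool" where
  "always_winnable k V A \<longleftrightarrow> (\<forall>lab. (\<forall>v\<in>V. lab v < k) \<longrightarrow> winnable k V A lab)"

end

theory Submission
  imports Defs "HOL-Library.FuncSet"
begin


definition nsum :: "('a \<times> 'a) set \<Rightarrow> 'a set \<Rightarrow> 'a \<Rightarrow> ('a \<Rightarrow> nat) \<Rightarrow> nat" where
  "nsum A V w x = (\<Sum>v\<in>V. if w = v \<or> (v, w) \<in> A then x v else 0)"

lemma fold_val:
  "0 < k \<Longrightarrow> lab w < k \<Longrightarrow>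
   fold (toggle A k) vs lab w = (lab w + length (filter (\<lambda>v. w = v \<or> (v,w) \<in> A) vs)) mod k"
proof (induction vs arbitrary: lab)
  case Nil then show ?case by simp
next
  case (Cons a vs)
  have "toggle A k a lab w < k" using Cons.prems by (simp add: toggle_def)
  then have "fold (toggle A k) (a#vs) lab w
     = (toggle A k a lab w + length (filter (\<lambda>v. w = v \<or> (v,w) \<in> A) vs)) mod k"
    using Cons.IH[of "toggle A k a lab"] Cons.prems by simp
  moreover have "toggle A k a lab w = (if w = a \<or> (a, w) \<in> A then (lab w + 1) mod k else lab w)"
    by (simp add: toggle_def)
  ultimately have eq: "fold (toggle A k) (a#vs) lab w = ((if w = a \<or> (a, w) \<in> A then (lab w + 1) mod k else lab w) + length (filter (\<lambda>v. w = v \<or> (v,w) \<in> A) vs)) mod k"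
    by simp
  show ?case
  proof (cases "w = a \<or> (a, w) \<in> A")
    case True
    then have "length (filter (\<lambda>v. w = v \<or> (v,w) \<in> A) (a#vs)) = Suc (length (filter (\<lambda>v. w = v \<or> (v,w) \<in> A) vs))"
      by auto
    then show ?thesis using eq True by (simp add: mod_add_left_eq)
  next
    case False
    then have "length (filter (\<lambda>v. w = v \<or> (v,w) \<in> A) (a#vs)) = length (filter (\<lambda>v. w = v \<or> (v,w) \<in> A) vs)"
      by auto
    then show ?thesis using eq False by simp
  qed
qed

lemma len_filter_count:
  "finite V \<Longrightarrow> set vs \<subseteq> V \<Longrightarrow>
   length (filter P vs) = (\<Sum>v\<in>V. if P v then count_list vs v else 0)"
proof (induction vs)
  case Nil then show ?case by simp
next
  case (Cons a vs)
  have "(\<Sum>v\<in>V. if P v then count_list (a#vs) v else 0)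
      = (\<Sum>v\<in>V. (if P v \<and> a = v then 1 else 0) + (if P v then count_list vs v else 0))"
    by (rule sum.cong) auto
  also have "\<dots> = (\<Sum>v\<in>V. if P v \<and> a = v then 1 else 0) + (\<Sum>v\<in>V. if P v then count_list vs v else 0)"
    by (rule sum.distrib)
  moreover have h1: "(\<Sum>v\<in>V. if P v \<and> a = v then 1 else 0) = (if P a then 1 else (0::nat))"
  proof -
    have "(\<Sum>v\<in>V. if P v \<and> a = v then 1 else 0) = (\<Sum>v\<in>V. if v = a then (if P a then 1 else 0) else (0::nat))"
      by (rule sum.cong) auto
    also have "\<dots> = (if P a then 1 else 0)" using Cons.prems by (subst sum.delta) auto
    finally show ?thesis .
  qed
  ultimately show ?case using Cons by auto
qed

lemma len_filter_concat:
  "distinct xs \<Longrightarrow>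
   length (filter P (concat (map (\<lambda>v. replicate (x v) v) xs))) = (\<Sum>v\<in>set xs. if P v then x v else 0)"
  by (induction xs) (auto simp: filter_replicate)

lemma winnable_iff:
  assumes "finite V" "0 < k" "\<forall>w\<in>V. lab w < k"
  shows "winnable k V A lab \<longleftrightarrow> (\<exists>x. \<forall>w\<in>V. (lab w + nsum A V w x) mod k = 0)"
proof
  assume "winnable k V A lab"
  then obtain vs where vs: "set vs \<subseteq> V" "\<forall>w\<in>V. fold (toggle A k) vs lab w = 0"
    unfolding winnable_def by blast
  show "\<exists>x. \<forall>w\<in>V. (lab w + nsum A V w x) mod k = 0"
  proof (intro exI ballI)
    fix w assume w: "w \<in> V"
    have "fold (toggle A k) vs lab w = (lab w + nsum A V w (count_list vs)) mod k"
      using fold_val[of k lab w A vs] assms w len_filter_count[OF assms(1) vs(1)]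
      by (simp add: nsum_def)
    then show "(lab w + nsum A V w (count_list vs)) mod k = 0" using vs w by simp
  qed
next
  assume "\<exists>x. \<forall>w\<in>V. (lab w + nsum A V w x) mod k = 0"
  then obtain x where x: "\<forall>w\<in>V. (lab w + nsum A V w x) mod k = 0" by blast
  obtain xs where xs: "set xs = V" "distinct xs" using finite_distinct_list[OF assms(1)] by blast
  define vs where "vs = concat (map (\<lambda>v. replicate (x v) v) xs)"
  have "set vs \<subseteq> V" using xs by (auto simp: vs_def)
  moreover have "\<forall>w\<in>V. fold (toggle A k) vs lab w = 0"
  proof
    fix w assume w: "w \<in> V"
    have "fold (toggle A k) vs lab w = (lab w + nsum A V w x) mod k"
      using fold_val[of k lab w A vs] assms w len_filter_concat[OF xs(2)] xs(1)
      by (simp add: nsum_def vs_def)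
    then show "fold (toggle A k) vs lab w = 0" using x w by simp
  qed
  ultimately show "winnable k V A lab" unfolding winnable_def by blast
qed

lemma arith1:
  assumes "0 < (k::nat)" "((k - b mod k) mod k + s) mod k = 0"
  shows "s mod k = b mod k"
proof (cases "b mod k = 0")
  case True then show ?thesis using assms by simp
next
  case False
  have lt: "b mod k < k" using assms by simp
  then have "(k - b mod k) mod k = k - b mod k" using False by simp
  then have h: "(k - b mod k + s) mod k = 0" using assms by simp
  have "s + k = (k - b mod k + s) + b mod k" using lt by simp
  then have "(s + k) mod k = ((k - b mod k + s) mod k + b mod k) mod k"
    by (metis mod_add_left_eq)
  then show ?thesis using h by simp
qed

lemma AW_iff:
  assumes "finite V" "0 < k"
  shows "always_winnable k V A \<longleftrightarrow> (\<forall>y. \<exists>x. \<forall>w\<in>V. nsum A V w x mod k = y w mod k)"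
proof
  assume aw: "always_winnable k V A"
  show "\<forall>y. \<exists>x. \<forall>w\<in>V. nsum A V w x mod k = y w mod k"
  proof
    fix y :: "'a \<Rightarrow> nat"
    define lab where "lab = (\<lambda>w. (k - y w mod k) mod k)"
    have lt: "\<forall>w\<in>V. lab w < k" using assms by (simp add: lab_def)
    then have "winnable k V A lab" using aw unfolding always_winnable_def by blast
    then obtain x where x: "\<forall>w\<in>V. (lab w + nsum A V w x) mod k = 0"
      using winnable_iff[OF assms lt] by blast
    show "\<exists>x. \<forall>w\<in>V. nsum A V w x mod k = y w mod k"
    proof (intro exI ballI)
      fix w assume "w \<in> V"
      then have "((k - y w mod k) mod k + nsum A V w x) mod k = 0" using x by (simp add: lab_def)
      then show "nsum A V w x mod k = y w mod k" by (rule arith1[OF assms(2)])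
    qed
  qed
next
  assume s: "\<forall>y. \<exists>x. \<forall>w\<in>V. nsum A V w x mod k = y w mod k"
  show "always_winnable k V A" unfolding always_winnable_def
  proof (intro allI impI)
    fix lab :: "'a \<Rightarrow> nat" assume lt: "\<forall>v\<in>V. lab v < k"
    obtain x where x: "\<forall>w\<in>V. nsum A V w x mod k = (k - lab w) mod k"
      using s[rule_format, of "\<lambda>w. k - lab w"] by blast
    have "\<forall>w\<in>V. (lab w + nsum A V w x) mod k = 0"
    proof
      fix w assume w: "w \<in> V"
      have "(lab w + nsum A V w x) mod k = (lab w + (k - lab w) mod k) mod k"
        using x w by (metis mod_add_right_eq)
      also have "\<dots> = (lab w + (k - lab w)) mod k" by (metis mod_add_right_eq)
      also have "\<dots> = 0"
      proof -
        have "lab w < k" using lt w by blast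
        then have "lab w + (k - lab w) = k" by simp
        then show ?thesis by simp
      qed
      finally show "(lab w + nsum A V w x) mod k = 0" .
    qed
    then show "winnable k V A lab" using winnable_iff[OF assms lt] by blast
  qed
qed

lemma nsum_cong: "\<forall>v\<in>V. x v = x' v \<Longrightarrow> nsum A V w x = nsum A V w x'"
  unfolding nsum_def by (rule sum.cong) auto

lemma nsum_mod: "nsum A V w (\<lambda>v. x v mod k) mod k = nsum A V w x mod k"
proof -
  have "nsum A V w (\<lambda>v. x v mod k) = (\<Sum>v\<in>V. (if w = v \<or> (v, w) \<in> A then x v else 0) mod k)"
    unfolding nsum_def by (rule sum.cong) auto
  then show ?thesis unfolding nsum_def by (simp add: mod_sum_eq)
qed



definition Phi :: "('a \<times> 'a) set \<Rightarrow> nat \<Rightarrow> 'a set \<Rightarrow> ('a \<Rightarrow> nat) \<Rightarrow> ('a \<Rightarrow> nat)" where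
  "Phi A k V x = restrict (\<lambda>w. nsum A V w x mod k) V"

lemma surj_iff_inj:
  assumes "finite V" "0 < k"
  shows "(\<forall>y. \<exists>x. \<forall>w\<in>V. nsum A V w x mod k = y w mod k) \<longleftrightarrow>
         (\<forall>x x'. (\<forall>w\<in>V. nsum A V w x mod k = nsum A V w x' mod k) \<longrightarrow> (\<forall>v\<in>V. x v mod k = x' v mod k))"
proof -
  define L where "L = PiE V (\<lambda>_. {..<k})"
  have finL: "finite L" unfolding L_def using assms(1) by (simp add: finite_PiE)
  have into: "Phi A k V ` L \<subseteq> L" unfolding L_def Phi_def using assms(2) by auto
  have red: "Phi A k V (restrict (\<lambda>v. x v mod k) V) = Phi A k V x" for x
  proof -
    have "nsum A V w (restrict (\<lambda>v. x v mod k) V) = nsum A V w (\<lambda>v. x v mod k)" for w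
      by (rule nsum_cong) auto
    then show ?thesis unfolding Phi_def using nsum_mod by (metis)
  qed
  have redL: "restrict (\<lambda>v. x v mod k) V \<in> L" for x unfolding L_def using assms(2) by auto
  have surj_eq: "(\<forall>y. \<exists>x. \<forall>w\<in>V. nsum A V w x mod k = y w mod k) \<longleftrightarrow> Phi A k V ` L = L"
  proof
    assume s: "\<forall>y. \<exists>x. \<forall>w\<in>V. nsum A V w x mod k = y w mod k"
    have "L \<subseteq> Phi A k V ` L"
    proof
      fix y assume y: "y \<in> L"
      obtain x where x: "\<forall>w\<in>V. nsum A V w x mod k = y w mod k" using s by blast
      have "Phi A k V x = y"
      proof
        fix w show "Phi A k V x w = y w"
          using x y unfolding Phi_def L_def by (cases "w \<in> V") (auto simp: PiE_def extensional_def Pi_iff)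
      qed
      then have "y = Phi A k V (restrict (\<lambda>v. x v mod k) V)" using red by simp
      then show "y \<in> Phi A k V ` L" using redL by blast
    qed
    then show "Phi A k V ` L = L" using into by blast
  next
    assume e: "Phi A k V ` L = L"
    show "\<forall>y. \<exists>x. \<forall>w\<in>V. nsum A V w x mod k = y w mod k"
    proof
      fix y
      have "restrict (\<lambda>v. y v mod k) V \<in> L" using redL .
      then obtain x where "x \<in> L" "Phi A k V x = restrict (\<lambda>v. y v mod k) V"
        using e by (metis imageE)
      then have "\<forall>w\<in>V. nsum A V w x mod k = y w mod k" unfolding Phi_def
        by (metis restrict_apply')
      then show "\<exists>x. \<forall>w\<in>V. nsum A V w x mod k = y w mod k" by blast
    qed
  qed
  have inj_eq: "(\<forall>x x'. (\<forall>w\<in>V. nsum A V w x mod k = nsum A V w x' mod k) \<longrightarrow> (\<forall>v\<in>V. x v mod k = x' v mod k))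
       \<longleftrightarrow> inj_on (Phi A k V) L"
  proof
    assume i: "\<forall>x x'. (\<forall>w\<in>V. nsum A V w x mod k = nsum A V w x' mod k) \<longrightarrow> (\<forall>v\<in>V. x v mod k = x' v mod k)"
    show "inj_on (Phi A k V) L"
    proof (rule inj_onI)
      fix x x' assume xL: "x \<in> L" and xL': "x' \<in> L" and eq: "Phi A k V x = Phi A k V x'"
      have "\<forall>w\<in>V. nsum A V w x mod k = nsum A V w x' mod k"
        using eq unfolding Phi_def by (metis restrict_apply')
      then have m: "\<forall>v\<in>V. x v mod k = x' v mod k" using i by blast
      show "x = x'"
      proof
        fix v show "x v = x' v"
          using m xL xL' unfolding L_def by (cases "v \<in> V") (auto simp: PiE_def extensional_def Pi_iff)
      qed
    qed
  next
    assume inj: "inj_on (Phi A k V) L"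
    show "\<forall>x x'. (\<forall>w\<in>V. nsum A V w x mod k = nsum A V w x' mod k) \<longrightarrow> (\<forall>v\<in>V. x v mod k = x' v mod k)"
    proof (intro allI impI)
      fix x x' assume h: "\<forall>w\<in>V. nsum A V w x mod k = nsum A V w x' mod k"
      have "Phi A k V x = Phi A k V x'" unfolding Phi_def using h by auto
      then have "Phi A k V (restrict (\<lambda>v. x v mod k) V) = Phi A k V (restrict (\<lambda>v. x' v mod k) V)"
        using red by simp
      then have "restrict (\<lambda>v. x v mod k) V = restrict (\<lambda>v. x' v mod k) V"
        using inj redL by (meson inj_onD)
      then show "\<forall>v\<in>V. x v mod k = x' v mod k" by (metis restrict_apply')
    qed
  qed
  have "Phi A k V ` L = L \<longleftrightarrow> inj_on (Phi A k V) L"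
    using finL into endo_inj_surj finite_surj_inj by (metis order_refl)
  then show ?thesis using surj_eq inj_eq by simp
qed

lemma nsum_split:
  assumes "finite V" "S \<subseteq> V"
  shows "nsum A V w x = nsum A S w x + nsum A (V - S) w x"
  unfolding nsum_def using sum.subset_diff[OF assms(2,1)] by (simp add: add.commute)

lemma nsum_zero:
  assumes "w \<in> S" "\<forall>r\<in>R. \<forall>s\<in>S. (r, s) \<notin> A" "S \<inter> R = {}"
  shows "nsum A R w x = 0"
  unfolding nsum_def using assms by (intro sum.neutral) auto

lemma arith2:
  assumes "0 < (k::nat)" "b mod k = (y + (k - a mod k)) mod k"
  shows "(a + b) mod k = y mod k"
proof -
  have lt: "a mod k < k" using assms by simp
  have "(a + b) mod k = (a mod k + b mod k) mod k" by (simp add: mod_add_eq)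
  also have "\<dots> = (a mod k + (y + (k - a mod k))) mod k" using assms by (metis mod_add_right_eq)
  also have "a mod k + (y + (k - a mod k)) = y + k" using lt by simp
  finally show ?thesis by simp
qed

lemma decomp:
  assumes fin: "finite V" and k: "0 < k" and SV: "S \<subseteq> V"
    and noarc: "\<forall>r\<in>V - S. \<forall>s\<in>S. (r, s) \<notin> A"
  shows "always_winnable k V A \<longleftrightarrow> always_winnable k S A \<and> always_winnable k (V - S) A"
proof -
  have finS: "finite S" using fin SV finite_subset by blast
  have finR: "finite (V - S)" using fin by simp
  have dis: "S \<inter> (V - S) = {}" by blast
  have nsS: "\<And>w x. w \<in> S \<Longrightarrow> nsum A V w x = nsum A S w x"
    using nsum_split[OF fin SV] nsum_zero[OF _ noarc dis] by simp
  have nsR: "\<And>w x. nsum A V w x = nsum A S w x + nsum A (V - S) w x"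
    using nsum_split[OF fin SV] by simp
  show ?thesis
  proof
    assume aw: "always_winnable k V A"
    have sV: "\<forall>y. \<exists>x. \<forall>w\<in>V. nsum A V w x mod k = y w mod k" using aw AW_iff[OF fin k] by blast
    have iV: "\<forall>x x'. (\<forall>w\<in>V. nsum A V w x mod k = nsum A V w x' mod k) \<longrightarrow> (\<forall>v\<in>V. x v mod k = x' v mod k)"
      using sV surj_iff_inj[OF fin k] by blast
    have "\<forall>y. \<exists>x. \<forall>w\<in>S. nsum A S w x mod k = y w mod k"
    proof
      fix y obtain x where x: "\<forall>w\<in>V. nsum A V w x mod k = y w mod k" using sV by blast
      have "\<forall>w\<in>S. nsum A S w x mod k = y w mod k"
      proof
        fix w assume "w \<in> S"
        then show "nsum A S w x mod k = y w mod k" using x nsS SV by (metis subsetD)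
      qed
      then show "\<exists>x. \<forall>w\<in>S. nsum A S w x mod k = y w mod k" by blast
    qed
    then have awS: "always_winnable k S A" using AW_iff[OF finS k] by blast
    have "\<forall>x x'. (\<forall>w\<in>V - S. nsum A (V - S) w x mod k = nsum A (V - S) w x' mod k) \<longrightarrow> (\<forall>v\<in>V - S. x v mod k = x' v mod k)"
    proof (intro allI impI)
      fix x x' assume h: "\<forall>w\<in>V - S. nsum A (V - S) w x mod k = nsum A (V - S) w x' mod k"
      define z where "z = (\<lambda>v. if v \<in> S then 0 else x v)"
      define z' where "z' = (\<lambda>v. if v \<in> S then 0 else x' v)"
      have zS: "nsum A S w z = 0" "nsum A S w z' = 0" for w
        unfolding nsum_def z_def z'_def by (auto intro: sum.neutral)
      have zR: "nsum A (V - S) w z = nsum A (V - S) w x" "nsum A (V - S) w z' = nsum A (V - S) w x'" for w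
        unfolding z_def z'_def by (auto intro: nsum_cong)
      have "\<forall>w\<in>V. nsum A V w z mod k = nsum A V w z' mod k"
      proof
        fix w assume "w \<in> V"
        show "nsum A V w z mod k = nsum A V w z' mod k"
        proof (cases "w \<in> S")
          case True then show ?thesis using nsS zS by simp
        next
          case False then show ?thesis using nsR zS zR h \<open>w \<in> V\<close> by simp
        qed
      qed
      then have "\<forall>v\<in>V. z v mod k = z' v mod k" using iV by blast
      then show "\<forall>v\<in>V - S. x v mod k = x' v mod k" unfolding z_def z'_def by auto
    qed
    then have "always_winnable k (V - S) A"
      using surj_iff_inj[OF finR k] AW_iff[OF finR k] by blast
    then show "always_winnable k S A \<and> always_winnable k (V - S) A" using awS by blast
  next
    assume "always_winnable k S A \<and> always_winnable k (V - S) A"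
    then have sS: "\<forall>y. \<exists>x. \<forall>w\<in>S. nsum A S w x mod k = y w mod k"
      and sR: "\<forall>y. \<exists>x. \<forall>w\<in>V - S. nsum A (V - S) w x mod k = y w mod k"
      using AW_iff[OF finS k] AW_iff[OF finR k] by blast+
    have "\<forall>y. \<exists>x. \<forall>w\<in>V. nsum A V w x mod k = y w mod k"
    proof
      fix y
      obtain xS where xS: "\<forall>w\<in>S. nsum A S w xS mod k = y w mod k" using sS by blast
      obtain xR where xR: "\<forall>w\<in>V - S. nsum A (V - S) w xR mod k = (y w + (k - nsum A S w xS mod k)) mod k"
        using sR[rule_format, of "\<lambda>w. y w + (k - nsum A S w xS mod k)"] by (metis mod_mod_trivial)
      define x where "x = (\<lambda>v. if v \<in> S then xS v else xR v)"
      have a: "nsum A S w x = nsum A S w xS" for w unfolding x_def by (auto intro: nsum_cong)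
      have b: "nsum A (V - S) w x = nsum A (V - S) w xR" for w unfolding x_def by (auto intro: nsum_cong)
      have "\<forall>w\<in>V. nsum A V w x mod k = y w mod k"
      proof
        fix w assume "w \<in> V"
        show "nsum A V w x mod k = y w mod k"
        proof (cases "w \<in> S")
          case True then show ?thesis using nsS a xS by simp
        next
          case False
          then have "nsum A (V - S) w xR mod k = (y w + (k - nsum A S w xS mod k)) mod k"
            using xR \<open>w \<in> V\<close> by blast
          then have "(nsum A S w xS + nsum A (V - S) w xR) mod k = y w mod k"
            by (rule arith2[OF k])
          then show ?thesis using nsR a b by simp
        qed
      qed
      then show "\<exists>x. \<forall>w\<in>V. nsum A V w x mod k = y w mod k" by blast
    qed
    then show "always_winnable k V A" using AW_iff[OF fin k] by blast
  qed
qed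



definition cls :: "('a \<times> 'a) set \<Rightarrow> 'a set \<Rightarrow> 'a \<Rightarrow> 'a set" where
  "cls A V u = {w\<in>V. (u, w) \<in> (A \<inter> V \<times> V)\<^sup>* \<and> (w, u) \<in> (A \<inter> V \<times> V)\<^sup>*}"

lemma rt_mem: "(a, b) \<in> (A \<inter> X \<times> X)\<^sup>* \<Longrightarrow> a \<noteq> b \<Longrightarrow> a \<in> X \<and> b \<in> X"
  by (induct rule: rtrancl_induct) auto

lemma path_in:
  assumes "(w, u) \<in> B\<^sup>*" "(u, t) \<in> B\<^sup>*"
  shows "(w, u) \<in> (B \<inter> {z. (w, z) \<in> B\<^sup>* \<and> (z, t) \<in> B\<^sup>*} \<times> {z. (w, z) \<in> B\<^sup>* \<and> (z, t) \<in> B\<^sup>*})\<^sup>*"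
  using assms
proof (induct rule: rtrancl_induct)
  case base then show ?case by simp
next
  case (step y z)
  have "(y, t) \<in> B\<^sup>*" using step by (meson converse_rtrancl_into_rtrancl)
  then have "(w, y) \<in> (B \<inter> {z. (w, z) \<in> B\<^sup>* \<and> (z, t) \<in> B\<^sup>*} \<times> {z. (w, z) \<in> B\<^sup>* \<and> (z, t) \<in> B\<^sup>*})\<^sup>*"
    using step by blast
  moreover have "(y, z) \<in> B \<inter> {z. (w, z) \<in> B\<^sup>* \<and> (z, t) \<in> B\<^sup>*} \<times> {z. (w, z) \<in> B\<^sup>* \<and> (z, t) \<in> B\<^sup>*}"
    using step \<open>(y, t) \<in> B\<^sup>*\<close> by auto
  ultimately show ?case by (rule rtrancl_into_rtrancl)
qed

lemma cls_sub: "cls A V u \<subseteq> V" unfolding cls_def by auto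

lemma cls_self: "u \<in> V \<Longrightarrow> u \<in> cls A V u" unfolding cls_def by auto

lemma cls_sc: "u \<in> V \<Longrightarrow> strongly_connected (cls A V u) (A \<inter> V \<times> V \<inter> cls A V u \<times> cls A V u)"
proof -
  assume uV: "u \<in> V"
  let ?C = "cls A V u"
  let ?B = "A \<inter> V \<times> V"
  have key: "(v, w) \<in> (A \<inter> V \<times> V \<inter> ?C \<times> ?C \<inter> ?C \<times> ?C)\<^sup>*" if v: "v \<in> ?C" and w: "w \<in> ?C" for v w
  proof -
    have vu: "(v, u) \<in> ?B\<^sup>*" and uv: "(u, v) \<in> ?B\<^sup>*" and vV: "v \<in> V" using v unfolding cls_def by simp_all
    have uw: "(u, w) \<in> ?B\<^sup>*" and wu: "(w, u) \<in> ?B\<^sup>*" using w unfolding cls_def by simp_all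
    have vw: "(v, w) \<in> ?B\<^sup>*" by (rule rtrancl_trans[OF vu uw])
    define P where "P = {z. (v, z) \<in> ?B\<^sup>* \<and> (z, u) \<in> ?B\<^sup>*}"
    have p: "(v, w) \<in> (?B \<inter> P \<times> P)\<^sup>*"
      unfolding P_def by (rule path_in[OF vw wu])
    have sub: "P \<subseteq> ?C"
    proof
      fix z assume z: "z \<in> P"
      then have vz: "(v, z) \<in> ?B\<^sup>*" and zu: "(z, u) \<in> ?B\<^sup>*" unfolding P_def by simp_all
      have zV: "z \<in> V"
      proof (cases "v = z")
        case True then show ?thesis using vV by simp
      next
        case False then show ?thesis using rt_mem[OF vz] by simp
      qed
      have "(u, z) \<in> ?B\<^sup>*" by (rule rtrancl_trans[OF uv vz])
      then show "z \<in> ?C" using zV zu unfolding cls_def by simp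
    qed
    have "?B \<inter> P \<times> P \<subseteq> A \<inter> V \<times> V \<inter> ?C \<times> ?C \<inter> ?C \<times> ?C" using sub by auto
    then have "(?B \<inter> P \<times> P)\<^sup>* \<subseteq> (A \<inter> V \<times> V \<inter> ?C \<times> ?C \<inter> ?C \<times> ?C)\<^sup>*" by (rule rtrancl_mono)
    then show ?thesis using p by (rule subsetD)
  qed
  show ?thesis unfolding strongly_connected_def
    by (intro ballI conjI key)
qed

lemma sc_char:
  "strong_component V (A \<inter> V \<times> V) C \<longleftrightarrow> (V = {} \<and> C = {}) \<or> (\<exists>u\<in>V. C = cls A V u)"
proof
  assume sc: "strong_component V (A \<inter> V \<times> V) C"
  have CV: "C \<subseteq> V" and scC: "strongly_connected C (A \<inter> V \<times> V \<inter> C \<times> C)"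
    and max: "\<And>C'. C \<subseteq> C' \<Longrightarrow> C' \<subseteq> V \<Longrightarrow> strongly_connected C' (A \<inter> V \<times> V \<inter> C' \<times> C') \<Longrightarrow> C' = C"
    using sc unfolding strong_component_def by simp_all
  show "(V = {} \<and> C = {}) \<or> (\<exists>u\<in>V. C = cls A V u)"
  proof (cases "V = {}")
    case True then show ?thesis using CV by simp
  next
    case False
    have "C \<noteq> {}"
    proof
      assume C0: "C = {}"
      obtain v where v: "v \<in> V" using False by blast
      have "strongly_connected {v} (A \<inter> V \<times> V \<inter> {v} \<times> {v})"
        unfolding strongly_connected_def by simp
      moreover have "C \<subseteq> {v}" "{v} \<subseteq> V" using C0 v by simp_all
      ultimately have "{v} = C" by (intro max)
      then show False using C0 by simp
    qed
    then obtain u where u: "u \<in> C" by blast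
    have uV: "u \<in> V" using u CV by blast
    have mono: "(A \<inter> V \<times> V \<inter> C \<times> C \<inter> C \<times> C)\<^sup>* \<subseteq> (A \<inter> V \<times> V)\<^sup>*" by (rule rtrancl_mono) blast
    have "C \<subseteq> cls A V u"
    proof
      fix w assume w: "w \<in> C"
      have "(u, w) \<in> (A \<inter> V \<times> V \<inter> C \<times> C \<inter> C \<times> C)\<^sup>*" "(w, u) \<in> (A \<inter> V \<times> V \<inter> C \<times> C \<inter> C \<times> C)\<^sup>*"
        using scC u w unfolding strongly_connected_def by simp_all
      then have "(u, w) \<in> (A \<inter> V \<times> V)\<^sup>*" "(w, u) \<in> (A \<inter> V \<times> V)\<^sup>*" using mono by (simp_all add: subsetD)
      moreover have "w \<in> V" using w CV by blast
      ultimately show "w \<in> cls A V u" unfolding cls_def by simp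
    qed
    then have "cls A V u = C" by (intro max cls_sub cls_sc[OF uV])
    then show ?thesis using uV by blast
  qed
next
  assume h: "(V = {} \<and> C = {}) \<or> (\<exists>u\<in>V. C = cls A V u)"
  show "strong_component V (A \<inter> V \<times> V) C"
  proof (cases "V = {}")
    case True then have "C = {}" using h by simp
    then show ?thesis using True unfolding strong_component_def strongly_connected_def by simp
  next
    case False
    then obtain u where u: "u \<in> V" and C: "C = cls A V u" using h by blast
    have "C' = C" if c1: "C \<subseteq> C'" and c2: "C' \<subseteq> V" and c3: "strongly_connected C' (A \<inter> V \<times> V \<inter> C' \<times> C')" for C'
    proof
      show "C' \<subseteq> C"
      proof
        fix w assume w: "w \<in> C'"
        have uC': "u \<in> C'" using c1 C cls_self[OF u] by blast
        have mono: "(A \<inter> V \<times> V \<inter> C' \<times> C' \<inter> C' \<times> C')\<^sup>* \<subseteq> (A \<inter> V \<times> V)\<^sup>*" by (rule rtrancl_mono) blast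
        have "(u, w) \<in> (A \<inter> V \<times> V \<inter> C' \<times> C' \<inter> C' \<times> C')\<^sup>*" "(w, u) \<in> (A \<inter> V \<times> V \<inter> C' \<times> C' \<inter> C' \<times> C')\<^sup>*"
          using c3 uC' w unfolding strongly_connected_def by simp_all
        then have "(u, w) \<in> (A \<inter> V \<times> V)\<^sup>*" "(w, u) \<in> (A \<inter> V \<times> V)\<^sup>*" using mono by (simp_all add: subsetD)
        moreover have "w \<in> V" using w c2 by blast
        ultimately show "w \<in> C" unfolding C cls_def by simp
      qed
    next
      show "C \<subseteq> C'" by (rule c1)
    qed
    then show ?thesis unfolding strong_component_def using C cls_sub[of A V u] cls_sc[OF u, of A] by simp
  qed
qed

lemma rt_pred:
  assumes "(a, b) \<in> (A \<inter> V \<times> V)\<^sup>*" "b \<in> S" "\<forall>a b. (a, b) \<in> A \<inter> V \<times> V \<longrightarrow> b \<in> S \<longrightarrow> a \<in> S"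
  shows "(a, b) \<in> (A \<inter> S \<times> S)\<^sup>*"
  using assms(1,2)
proof (induct rule: rtrancl_induct)
  case base then show ?case by simp
next
  case (step y z)
  then have "y \<in> S" using assms(3) by blast
  then show ?case using step by (meson IntI SigmaI rtrancl_into_rtrancl IntD1)
qed

lemma rt_succ:
  assumes "(a, b) \<in> (A \<inter> V \<times> V)\<^sup>*" "a \<in> R" "\<forall>a b. (a, b) \<in> A \<inter> V \<times> V \<longrightarrow> a \<in> R \<longrightarrow> b \<in> R"
  shows "(a, b) \<in> (A \<inter> R \<times> R)\<^sup>*"
  using assms(1,2)
proof (induct rule: converse_rtrancl_induct)
  case base then show ?case by simp
next
  case (step y z)
  then have "z \<in> R" using assms(3) by blast
  then show ?case using step by (meson IntI SigmaI converse_rtrancl_into_rtrancl IntD1)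
qed

lemma rt_sub: "S \<subseteq> V \<Longrightarrow> (A \<inter> S \<times> S)\<^sup>* \<subseteq> (A \<inter> V \<times> V)\<^sup>*"
  by (rule rtrancl_mono) auto

lemma cls_pred:
  assumes "S \<subseteq> V" "\<forall>a b. (a, b) \<in> A \<inter> V \<times> V \<longrightarrow> b \<in> S \<longrightarrow> a \<in> S" "u \<in> S"
  shows "cls A S u = cls A V u"
proof
  show "cls A S u \<subseteq> cls A V u" using assms(1) rt_sub[OF assms(1), of A] unfolding cls_def by blast
next
  show "cls A V u \<subseteq> cls A S u"
  proof
    fix w assume w: "w \<in> cls A V u"
    have wu: "(w, u) \<in> (A \<inter> S \<times> S)\<^sup>*" using w rt_pred[OF _ assms(3) assms(2)] unfolding cls_def by blast
    then have wS: "w \<in> S" using rt_mem assms(3) by metis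
    have "(u, w) \<in> (A \<inter> S \<times> S)\<^sup>*" using w rt_pred[OF _ wS assms(2)] unfolding cls_def by blast
    then show "w \<in> cls A S u" using wu wS unfolding cls_def by blast
  qed
qed

lemma cls_succ:
  assumes "R \<subseteq> V" "\<forall>a b. (a, b) \<in> A \<inter> V \<times> V \<longrightarrow> a \<in> R \<longrightarrow> b \<in> R" "u \<in> R"
  shows "cls A R u = cls A V u"
proof
  show "cls A R u \<subseteq> cls A V u" using assms(1) rt_sub[OF assms(1), of A] unfolding cls_def by blast
next
  show "cls A V u \<subseteq> cls A R u"
  proof
    fix w assume w: "w \<in> cls A V u"
    have uw: "(u, w) \<in> (A \<inter> R \<times> R)\<^sup>*" using w rt_succ[OF _ assms(3) assms(2)] unfolding cls_def by blast
    then have wR: "w \<in> R" using rt_mem assms(3) by metis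
    have "(w, u) \<in> (A \<inter> R \<times> R)\<^sup>*" using w rt_succ[OF _ wR assms(2)] unfolding cls_def by blast
    then show "w \<in> cls A R u" using uw wR unfolding cls_def by blast
  qed
qed



lemma AW_empty: "always_winnable k {} A"
  unfolding always_winnable_def winnable_def by (intro allI impI exI[of _ "[]"]) simp

lemma AW_restrict:
  assumes "finite C" "0 < k"
  shows "always_winnable k C (A \<inter> C \<times> C) \<longleftrightarrow> always_winnable k C A"
proof -
  have "nsum (A \<inter> C \<times> C) C w x = nsum A C w x" if "w \<in> C" for w x
    unfolding nsum_def using that by (intro sum.cong) auto
  then show ?thesis using AW_iff[OF assms, of "A \<inter> C \<times> C"] AW_iff[OF assms, of A] by simp
qed

lemma comp_all:
  "X \<noteq> {} \<Longrightarrow> (\<forall>C. strong_component X (A \<inter> X \<times> X) C \<longrightarrow> Q C) \<longleftrightarrow> (\<forall>u\<in>X. Q (cls A X u))"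
  by (auto simp: sc_char)

lemma core:
  assumes k: "0 < k"
  shows "finite V \<Longrightarrow> always_winnable k V A \<longleftrightarrow>
    (\<forall>C. strong_component V (A \<inter> V \<times> V) C \<longrightarrow> always_winnable k C A)"
proof (induction V rule: finite_psubset_induct)
  case (psubset V)
  show ?case
  proof (cases "\<exists>v\<in>V. {u\<in>V. (u, v) \<in> (A \<inter> V \<times> V)\<^sup>*} \<noteq> V")
    case True
    then obtain v where v: "v \<in> V" and ne: "{u\<in>V. (u, v) \<in> (A \<inter> V \<times> V)\<^sup>*} \<noteq> V" by blast
    define S where "S = {u\<in>V. (u, v) \<in> (A \<inter> V \<times> V)\<^sup>*}"
    have SV: "S \<subseteq> V" by (auto simp: S_def)
    have vS: "v \<in> S" using v by (simp add: S_def)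
    have pred: "\<forall>a b. (a, b) \<in> A \<inter> V \<times> V \<longrightarrow> b \<in> S \<longrightarrow> a \<in> S"
      unfolding S_def by (blast intro: converse_rtrancl_into_rtrancl)
    have succ: "\<forall>a b. (a, b) \<in> A \<inter> V \<times> V \<longrightarrow> a \<in> V - S \<longrightarrow> b \<in> V - S" using pred by blast
    have noarc: "\<forall>r\<in>V - S. \<forall>s\<in>S. (r, s) \<notin> A" using pred SV by blast
    have SsV: "S \<subset> V" using SV ne S_def by blast
    have RsV: "V - S \<subset> V" using v vS by blast
    have Rne: "V - S \<noteq> {}" using SsV by blast
    have Vne: "V \<noteq> {}" using v by blast
    have Sne: "S \<noteq> {}" using vS by blast
    have IHS: "always_winnable k S A \<longleftrightarrow> (\<forall>u\<in>S. always_winnable k (cls A S u) A)"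
      using psubset.IH[OF SsV] comp_all[OF Sne] by simp
    have IHR: "always_winnable k (V - S) A \<longleftrightarrow> (\<forall>u\<in>V - S. always_winnable k (cls A (V - S) u) A)"
      using psubset.IH[OF RsV] comp_all[OF Rne] by simp
    have cS: "\<forall>u\<in>S. cls A S u = cls A V u" using cls_pred[OF SV pred] by blast
    have cR: "\<forall>u\<in>V - S. cls A (V - S) u = cls A V u" using cls_succ[OF _ succ] by blast
    have "always_winnable k V A \<longleftrightarrow> always_winnable k S A \<and> always_winnable k (V - S) A"
      by (rule decomp[OF psubset.hyps k SV noarc])
    also have "\<dots> \<longleftrightarrow> (\<forall>u\<in>S. always_winnable k (cls A V u) A) \<and> (\<forall>u\<in>V - S. always_winnable k (cls A V u) A)"
      using IHS IHR cS cR by simp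
    also have "\<dots> \<longleftrightarrow> (\<forall>u\<in>V. always_winnable k (cls A V u) A)" using SV by blast
    also have "\<dots> \<longleftrightarrow> (\<forall>C. strong_component V (A \<inter> V \<times> V) C \<longrightarrow> always_winnable k C A)"
      using comp_all[OF Vne] by simp
    finally show ?thesis .
  next
    case False
    then have all: "\<forall>v\<in>V. \<forall>u\<in>V. (u, v) \<in> (A \<inter> V \<times> V)\<^sup>*" by blast
    show ?thesis
    proof (cases "V = {}")
      case True
      then have "\<forall>C. strong_component V (A \<inter> V \<times> V) C \<longrightarrow> C = {}" using True sc_char[of V A] by blast
      then show ?thesis using True AW_empty by metis
    next
      case Vne: False
      have "\<forall>u\<in>V. cls A V u = V" using all unfolding cls_def by blast
      then have "(\<forall>C. strong_component V (A \<inter> V \<times> V) C \<longrightarrow> always_winnable k C A)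
           \<longleftrightarrow> (\<forall>u\<in>V. always_winnable k V A)" using comp_all[OF Vne] by simp
      then show ?thesis using Vne by blast
    qed
  qed
qed

theorem mainTheorem3:
  fixes V :: "'a set" and A :: "('a \<times> 'a) set" and k :: nat
  assumes "finite V" and "digraph V A" and "k \<ge> 2"
  shows "always_winnable k V A \<longleftrightarrow>
         (\<forall>C. strong_component V A C \<longrightarrow> always_winnable k C (A \<inter> (C \<times> C)))"
proof -
  have k: "0 < k" using assms(3) by simp
  have AV: "A \<inter> V \<times> V = A" using assms(2) unfolding digraph_def by blast
  have "(\<forall>C. strong_component V A C \<longrightarrow> always_winnable k C (A \<inter> (C \<times> C)))
      \<longleftrightarrow> (\<forall>C. strong_component V A C \<longrightarrow> always_winnable k C A)"
  proof -
    have "always_winnable k C (A \<inter> (C \<times> C)) \<longleftrightarrow> always_winnable k C A" if "strong_component V A C" for C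
    proof -
      have "C \<subseteq> V" using that unfolding strong_component_def by blast
      then have "finite C" using assms(1) finite_subset by blast
      then show ?thesis using AW_restrict[OF _ k] by blast
    qed
    then show ?thesis by blast
  qed
  then show ?thesis using core[OF k assms(1), of A] AV by simp
qed

end
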